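(* Let $\mathbb{X}$ be a finite set, $\mathcal{H}_A$ a Hilbert space of finite dimension $d_A$, $\{\rho_A^x\}_{x\in\mathbb{X}}$ density operators on $\mathcal{H}_A$, $U_\theta$ a unitary on $\mathcal{H}_A$, $O=\{O_c\}_c$ a POVM on $\mathcal{H}_A$ with finitely many outcomes, and $p\in[0,1]$. Let $\mathcal{D}_{p,d_A}(\rho)=\frac{p}{d_A}I+(1-p)\rho$ and \[ \Gamma(\mathcal{D}_{p,d_A})=\max_{x\in\mathbb{X}}\sum_c\big|\operatorname{tr}(O_cU_\theta\rho_A^xU_\theta^\dagger)-\operatorname{tr}(O_c\mathcal{D}_{p,d_A}(U_\theta\rho_A^xU_\theta^\dagger))\big|. \] Then, writing $\mathcal{D}_{p,d_A}(\rho_A)$ for the family $\{\mathcal{D}_{p,d_A}(\rho_A^x)\}_{x\in\mathbb{X}}$, \[ \mathcal{B}(X\rightarrow A)_{\mathcal{D}_{p,d_A}(\rho_A)}\leq\mathcal{R}(X\rightarrow A)_{\mathcal{D}_{p,d_A}(\rho_A)}\leq\log\Big((1-2d_A)+\frac{4d_A}{\Gamma(\mathcal{D}_{p,d_A})}\Big), \] with the right-hand side interpreted as $+\infty$ when $\Gamma(\mathcal{D}_{p,d_A})=0$.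
   Context: All logarithms are base 2. For a density operator $\rho$ and positive semi-definite $\sigma$, $\widetilde{D}_\infty(\rho\|\sigma)=\log\inf\{\mu\in\mathbb{R}:\rho\leq\mu\sigma\}$ ($+\infty$ if $\operatorname{supp}\rho\not\subseteq\operatorname{supp}\sigma$). For a family $\{\tau^x\}_{x\in\mathbb{X}}$ of density operators, $\mathcal{B}=\min_{\pi\in\Delta(\mathbb{X})}\max_x\widetilde{D}_\infty(\tau^x\|\sum_{x'}\pi(x')\tau^{x'})$ (with $\Delta(\mathbb{X})$ the probability mass functions on $\mathbb{X}$) and $\mathcal{R}=\max_{x,x'}\widetilde{D}_\infty(\tau^x\|\tau^{x'})$. *)

theory Defs
  imports Complex_Main "HOL-Library.Extended_Real" "Jordan_Normal_Form.Matrix"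
begin

definition trace :: "complex mat \<Rightarrow> complex" where
  "trace A = (\<Sum>i<dim_row A. A $$ (i,i))"

definition adjoint_mat :: "complex mat \<Rightarrow> complex mat" where
  "adjoint_mat A = mat (dim_col A) (dim_row A) (\<lambda>(i,j). cnj (A $$ (j,i)))"

definition qform :: "complex mat \<Rightarrow> complex vec \<Rightarrow> complex" where
  "qform A v = (\<Sum>i<dim_vec v. \<Sum>j<dim_vec v. cnj (v $ i) * A $$ (i,j) * v $ j)"

definition psd :: "nat \<Rightarrow> complex mat \<Rightarrow> bool" where
  "psd d A \<longleftrightarrow> A \<in> carrier_mat d d \<and> adjoint_mat A = A \<and>
     (\<forall>v \<in> carrier_vec d. Im (qform A v) = 0 \<and> Re (qform A v) \<ge> 0)"

definition density :: "nat \<Rightarrow> complex mat \<Rightarrow> bool" where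
  "density d \<rho> \<longleftrightarrow> psd d \<rho> \<and> trace \<rho> = 1"

definition unitary :: "nat \<Rightarrow> complex mat \<Rightarrow> bool" where
  "unitary d U \<longleftrightarrow> U \<in> carrier_mat d d \<and> U * adjoint_mat U = 1\<^sub>m d \<and> adjoint_mat U * U = 1\<^sub>m d"

definition msum :: "nat \<Rightarrow> ('c \<Rightarrow> complex mat) \<Rightarrow> 'c set \<Rightarrow> complex mat" where
  "msum d f S = mat d d (\<lambda>(i,j). \<Sum>s\<in>S. f s $$ (i,j))"

definition povm :: "nat \<Rightarrow> 'c set \<Rightarrow> ('c \<Rightarrow> complex mat) \<Rightarrow> bool" where
  "povm d C Ob \<longleftrightarrow> finite C \<and> (\<forall>c\<in>C. psd d (Ob c)) \<and> msum d Ob C = 1\<^sub>m d"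

definition loewner_le :: "nat \<Rightarrow> complex mat \<Rightarrow> complex mat \<Rightarrow> bool" where
  "loewner_le d A B \<longleftrightarrow> psd d (B - A)"

definition supp :: "nat \<Rightarrow> complex mat \<Rightarrow> complex vec set" where
  "supp d A = {A *\<^sub>v v | v. v \<in> carrier_vec d}"

definition Dmax :: "nat \<Rightarrow> complex mat \<Rightarrow> complex mat \<Rightarrow> ereal" where
  "Dmax d \<rho> \<sigma> = (if supp d \<rho> \<subseteq> supp d \<sigma>
      then ereal (log 2 (Inf {\<mu>::real. loewner_le d \<rho> (complex_of_real \<mu> \<cdot>\<^sub>m \<sigma>)}))
      else \<infinity>)"

definition pmfs :: "'x set \<Rightarrow> ('x \<Rightarrow> real) set" where
  "pmfs X = {\<pi>. (\<forall>x\<in>X. \<pi> x \<ge> 0) \<and> (\<Sum>x\<in>X. \<pi> x) = 1}"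

definition Bq :: "nat \<Rightarrow> 'x set \<Rightarrow> ('x \<Rightarrow> complex mat) \<Rightarrow> ereal" where
  "Bq d X \<tau> = (INF \<pi>\<in>pmfs X. Max ((\<lambda>x. Dmax d (\<tau> x)
        (msum d (\<lambda>x'. complex_of_real (\<pi> x') \<cdot>\<^sub>m \<tau> x') X)) ` X))"

definition Rq :: "nat \<Rightarrow> 'x set \<Rightarrow> ('x \<Rightarrow> complex mat) \<Rightarrow> ereal" where
  "Rq d X \<tau> = Max ((\<lambda>(x,x'). Dmax d (\<tau> x) (\<tau> x')) ` (X \<times> X))"

definition depol :: "real \<Rightarrow> nat \<Rightarrow> complex mat \<Rightarrow> complex mat" where
  "depol p d \<rho> = complex_of_real (p / real d) \<cdot>\<^sub>m 1\<^sub>m d + complex_of_real (1 - p) \<cdot>\<^sub>m \<rho>"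

definition Gamma_depol :: "real \<Rightarrow> nat \<Rightarrow> 'x set \<Rightarrow> ('x \<Rightarrow> complex mat) \<Rightarrow> complex mat
     \<Rightarrow> 'c set \<Rightarrow> ('c \<Rightarrow> complex mat) \<Rightarrow> real" where
  "Gamma_depol p d X \<rho> U C Ob = Max ((\<lambda>x. \<Sum>c\<in>C.
       cmod (trace (Ob c * (U * \<rho> x * adjoint_mat U))
           - trace (Ob c * depol p d (U * \<rho> x * adjoint_mat U)))) ` X)"

end

theory Submission imports Defs "HOL-Library.Complex_Order" "HOL-Analysis.Convex" "Jordan_Normal_Form.Determinant"

begin

definition Q :: "nat \<Rightarrow> complex mat \<Rightarrow> (nat \<Rightarrow> complex) \<Rightarrow> complex" where
  "Q d A f = (\<Sum>i<d. \<Sum>j<d. cnj (f i) * A $$ (i,j) * f j)"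

lemma qform_Q: "v \<in> carrier_vec d \<Longrightarrow> qform A v = Q d A (\<lambda>i. v $ i)"
  by (simp add: qform_def Q_def)

lemma herm_iff:
  assumes "A \<in> carrier_mat d d"
  shows "adjoint_mat A = A \<longleftrightarrow> (\<forall>i<d. \<forall>j<d. A $$ (j,i) = cnj (A $$ (i,j)))"
proof
  assume h: "adjoint_mat A = A"
  show "\<forall>i<d. \<forall>j<d. A $$ (j,i) = cnj (A $$ (i,j))"
  proof (intro allI impI)
    fix i j assume "i < d" "j < d"
    have "adjoint_mat A $$ (j,i) = cnj (A $$ (i,j))"
      using assms \<open>i<d\<close> \<open>j<d\<close> by (simp add: adjoint_mat_def)
    then show "A $$ (j,i) = cnj (A $$ (i,j))" unfolding h .
  qed
next
  assume h: "\<forall>i<d. \<forall>j<d. A $$ (j,i) = cnj (A $$ (i,j))"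
  show "adjoint_mat A = A"
  proof (rule eq_matI)
    fix i j assume "i < dim_row A" "j < dim_col A"
    then have "i < d" "j < d" using assms by auto
    then have "A $$ (i,j) = cnj (A $$ (j,i))" using h by blast
    then show "adjoint_mat A $$ (i,j) = A $$ (i,j)"
      using assms \<open>i<d\<close> \<open>j<d\<close> by (simp add: adjoint_mat_def)
  qed (use assms in \<open>simp_all add: adjoint_mat_def\<close>)
qed

lemma psd_iff:
  "psd d A \<longleftrightarrow> A \<in> carrier_mat d d \<and> (\<forall>i<d. \<forall>j<d. A $$ (j,i) = cnj (A $$ (i,j)))
     \<and> (\<forall>f. 0 \<le> Q d A f)"
proof
  assume p: "psd d A"
  then have c: "A \<in> carrier_mat d d" by (simp add: psd_def)
  moreover have "\<forall>i<d. \<forall>j<d. A $$ (j,i) = cnj (A $$ (i,j))" using p c herm_iff[OF c] unfolding psd_def by blast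
  moreover have "0 \<le> Q d A f" for f
  proof -
    have "vec d f \<in> carrier_vec d" by simp
    then have "Im (qform A (vec d f)) = 0 \<and> Re (qform A (vec d f)) \<ge> 0" using p by (simp add: psd_def)
    moreover have "qform A (vec d f) = Q d A f" by (simp add: qform_def Q_def)
    ultimately show ?thesis by (simp add: less_eq_complex_def)
  qed
  ultimately show "A \<in> carrier_mat d d \<and> (\<forall>i<d. \<forall>j<d. A $$ (j,i) = cnj (A $$ (i,j))) \<and> (\<forall>f. 0 \<le> Q d A f)" by blast
next
  assume h: "A \<in> carrier_mat d d \<and> (\<forall>i<d. \<forall>j<d. A $$ (j,i) = cnj (A $$ (i,j))) \<and> (\<forall>f. 0 \<le> Q d A f)"
  show "psd d A" unfolding psd_def
  proof (intro conjI ballI)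
    show "A \<in> carrier_mat d d" using h by blast
    show "adjoint_mat A = A" using h herm_iff[of A d] by blast
    fix v :: "complex vec" assume "v \<in> carrier_vec d"
    then have "qform A v = Q d A (\<lambda>i. v $ i)" by (rule qform_Q)
    moreover have "0 \<le> Q d A (\<lambda>i. v $ i)" using h by blast
    ultimately show "Im (qform A v) = 0" "0 \<le> Re (qform A v)" by (simp_all add: less_eq_complex_def)
  qed
qed

lemma sum_delta_i: "(k::nat) < d \<Longrightarrow> (\<Sum>i<d. \<Sum>j<d. if i = k then g i j else (0::complex)) = (\<Sum>j<d. g k j)"
proof -
  assume k: "k < d"
  have "(\<Sum>i<d. \<Sum>j<d. if i = k then g i j else (0::complex)) = (\<Sum>i<d. if i = k then (\<Sum>j<d. g i j) else 0)"
    by (intro sum.cong refl) simp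
  also have "\<dots> = (\<Sum>j<d. g k j)" using k by (simp add: sum.delta)
  finally show ?thesis .
qed

lemma sum_delta_j: "(k::nat) < d \<Longrightarrow> (\<Sum>i<d. \<Sum>j<d. if j = k then g i j else (0::complex)) = (\<Sum>i<d. g i k)"
proof -
  assume k: "k < d"
  have "(\<Sum>i<d. \<Sum>j<d. if j = k then g i j else (0::complex)) = (\<Sum>i<d. g i k)"
    using k by (intro sum.cong refl) (simp add: sum.delta')
  then show ?thesis .
qed

lemma sum_delta_ij: "(k::nat) < d \<Longrightarrow> (\<Sum>i<d. \<Sum>j<d. if i = k then (if j = k then e else 0) else (0::complex)) = e"
  by (simp add: sum_delta_i)

lemma Q_expand:
  assumes k: "k < d"
  shows "Q d A (\<lambda>i. f i + (if i = k then t else 0)) =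
     Q d A f + cnj t * (\<Sum>j<d. A $$ (k,j) * f j) + t * (\<Sum>i<d. cnj (f i) * A $$ (i,k))
       + cnj t * t * A $$ (k,k)"
proof -
  have "Q d A (\<lambda>i. f i + (if i = k then t else 0)) =
     (\<Sum>i<d. \<Sum>j<d. cnj (f i) * A $$ (i,j) * f j + (if i = k then cnj t * A $$ (i,j) * f j else 0)
        + (if j = k then cnj (f i) * A $$ (i,j) * t else 0)
        + (if i = k then (if j = k then cnj t * A $$ (i,j) * t else 0) else 0))"
    unfolding Q_def by (intro sum.cong refl, simp only: complex_cnj_add, (cases "i = k"; cases "j = k"), simp_all add: algebra_simps)
  also have "\<dots> = Q d A f + (\<Sum>j<d. cnj t * A $$ (k,j) * f j) + (\<Sum>i<d. cnj (f i) * A $$ (i,k) * t)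
       + cnj t * A $$ (k,k) * t"
    unfolding sum.distrib Q_def sum_delta_i[OF k] sum_delta_j[OF k] using k by (simp add: sum.delta)
  also have "\<dots> = Q d A f + cnj t * (\<Sum>j<d. A $$ (k,j) * f j) + t * (\<Sum>i<d. cnj (f i) * A $$ (i,k))
       + cnj t * t * A $$ (k,k)"
  proof -
    have "(\<Sum>j<d. cnj t * A $$ (k,j) * f j) = cnj t * (\<Sum>j<d. A $$ (k,j) * f j)"
      by (simp add: sum_distrib_left mult.assoc)
    moreover have "(\<Sum>i<d. cnj (f i) * A $$ (i,k) * t) = t * (\<Sum>i<d. cnj (f i) * A $$ (i,k))"
      by (simp add: sum_distrib_left mult_ac)
    moreover have "cnj t * A $$ (k,k) * t = cnj t * t * A $$ (k,k)" by (simp add: mult_ac)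
    ultimately show ?thesis by simp
  qed
  finally show ?thesis .
qed


lemma psd_carrier: "psd d A \<Longrightarrow> A \<in> carrier_mat d d"
  by (simp add: psd_def)

lemma psd_herm: "psd d A \<Longrightarrow> i < d \<Longrightarrow> j < d \<Longrightarrow> cnj (A $$ (i,j)) = A $$ (j,i)"
  unfolding psd_iff by metis

lemma psd_Q: "psd d A \<Longrightarrow> 0 \<le> Q d A f"
  unfolding psd_iff by blast

lemma Q_zero: "Q d A (\<lambda>_. 0) = 0"
  by (simp add: Q_def)

lemma Q_unit:
  assumes "k < d"
  shows "Q d A (\<lambda>i. if i = k then t else 0) = cnj t * t * A $$ (k,k)"
proof -
  have "Q d A (\<lambda>i. if i = k then t else 0) = Q d A (\<lambda>i. (\<lambda>_. 0) i + (if i = k then t else 0))"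
    by simp
  also have "\<dots> = cnj t * t * A $$ (k,k)"
    unfolding Q_expand[OF assms] Q_zero by simp
  finally show ?thesis .
qed

lemma psd_diag: "psd d A \<Longrightarrow> k < d \<Longrightarrow> 0 \<le> A $$ (k,k)"
  using psd_Q[of d A "\<lambda>i. if i = k then 1 else 0"] Q_unit[of k d A 1] by simp

lemma psd_zero_row:
  assumes p: "psd d A" and k: "k < d" and j: "j < d" and z: "A $$ (k,k) = 0"
  shows "A $$ (k,j) = 0"
proof (rule ccontr)
  assume nz: "A $$ (k,j) \<noteq> 0"
  define a where "a = A $$ (k,j)"
  define f where "f = (\<lambda>i. if i = j then (1::complex) else 0)"
  define lam where "lam = (Re (A $$ (j,j)) + 1) / (2 * (cmod a)^2)"
  define t where "t = - complex_of_real lam * a"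
  have S: "(\<Sum>l<d. A $$ (k,l) * f l) = a"
    using j by (simp add: f_def a_def if_distrib cong: if_cong)
  have S': "(\<Sum>i<d. cnj (f i) * A $$ (i,k)) = cnj a"
  proof -
    have "(\<Sum>i<d. cnj (f i) * A $$ (i,k)) = (\<Sum>i<d. if i = j then A $$ (i,k) else 0)"
      by (intro sum.cong refl) (simp add: f_def)
    also have "\<dots> = A $$ (j,k)" using j by simp
    finally show ?thesis using psd_herm[OF p k j] a_def by simp
  qed
  have Qf: "Q d A f = A $$ (j,j)"
    using Q_unit[OF j, of A 1] by (simp add: f_def)
  have "0 \<le> Q d A (\<lambda>i. f i + (if i = k then t else 0))"
    by (rule psd_Q[OF p])
  also have "\<dots> = A $$ (j,j) + cnj t * a + t * cnj a"
    unfolding Q_expand[OF k] S S' Qf z by simp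
  finally have ge: "0 \<le> Re (A $$ (j,j) + cnj t * a + t * cnj a)"
    by (simp add: less_eq_complex_def)
  have na: "(cmod a)^2 > 0" using nz a_def by simp
  have "Re (cnj t * a + t * cnj a) = - 2 * lam * (cmod a)^2"
    unfolding t_def cmod_power2 by (simp add: algebra_simps power2_eq_square)
  also have "\<dots> = - (Re (A $$ (j,j)) + 1)"
    unfolding lam_def using na by (simp add: field_simps)
  finally have "Re (cnj t * a + t * cnj a) = - (Re (A $$ (j,j)) + 1)" .
  with ge show False by simp
qed


definition peel :: "nat \<Rightarrow> nat \<Rightarrow> complex mat \<Rightarrow> complex mat" where
  "peel d k A = mat d d (\<lambda>(i,j). A $$ (i,j) - A $$ (i,k) * A $$ (k,j) / A $$ (k,k))"

lemma psd_diag_real: "psd d A \<Longrightarrow> k < d \<Longrightarrow> cnj (A $$ (k,k)) = A $$ (k,k)"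
  using psd_herm by blast

lemma peel_psd:
  assumes p: "psd d A" and k: "k < d" and nz: "A $$ (k,k) \<noteq> 0"
  shows "psd d (peel d k A)"
  unfolding psd_iff
proof (intro conjI allI impI)
  show "peel d k A \<in> carrier_mat d d" by (simp add: peel_def)
  fix i j assume i: "i < d" and j: "j < d"
  have h1: "cnj (A $$ (i,j)) = A $$ (j,i)" using psd_herm[OF p i j] .
  have h2: "cnj (A $$ (i,k)) = A $$ (k,i)" using psd_herm[OF p i k] .
  have h3: "cnj (A $$ (k,j)) = A $$ (j,k)" using psd_herm[OF p k j] .
  have h4: "cnj (A $$ (k,k)) = A $$ (k,k)" using psd_herm[OF p k k] .
  show "peel d k A $$ (j,i) = cnj (peel d k A $$ (i,j))"
    using i j by (simp add: peel_def h1 h2 h3 h4 mult.commute)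
next
  fix f
  define a where "a = A $$ (k,k)"
  define S where "S = (\<Sum>j<d. A $$ (k,j) * f j)"
  define S' where "S' = (\<Sum>i<d. cnj (f i) * A $$ (i,k))"
  define t where "t = - S / a"
  have ca: "cnj a = a" unfolding a_def using psd_herm[OF p k k] .
  have anz: "a \<noteq> 0" using nz a_def by simp
  have cS: "cnj S = S'"
  proof -
    have "cnj S = (\<Sum>j<d. cnj (A $$ (k,j)) * cnj (f j))" by (simp add: S_def)
    also have "\<dots> = S'" unfolding S'_def
      by (intro sum.cong refl) (simp add: psd_herm[OF p k] mult.commute)
    finally show ?thesis .
  qed
  have "Q d (peel d k A) f = (\<Sum>i<d. \<Sum>j<d. cnj (f i) * A $$ (i,j) * f j
      - (cnj (f i) * A $$ (i,k)) * (A $$ (k,j) * f j) / a)"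
    unfolding Q_def a_def by (intro sum.cong refl) (simp add: peel_def algebra_simps)
  also have "\<dots> = Q d A f - S' * S / a"
    unfolding Q_def S_def S'_def sum_subtractf sum_divide_distrib[symmetric] sum_product by simp
  also have "\<dots> = Q d A f + cnj t * S + t * S' + cnj t * t * a"
    unfolding t_def using anz ca cS by (simp add: field_simps)
  also have "\<dots> = Q d A (\<lambda>i. f i + (if i = k then t else 0))"
    unfolding Q_expand[OF k] S_def S'_def a_def ..
  also have "0 \<le> \<dots>" by (rule psd_Q[OF p])
  finally show "0 \<le> Q d (peel d k A) f" by simp
qed


definition TR :: "nat \<Rightarrow> complex mat \<Rightarrow> complex mat \<Rightarrow> complex" where
  "TR d W A = (\<Sum>i<d. \<Sum>j<d. W $$ (i,j) * A $$ (j,i))"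

lemma nonneg_div_real:
  assumes "0 \<le> (z::complex)" "0 \<le> a" "a \<noteq> 0"
  shows "0 \<le> z / a"
proof -
  have "Im z = 0" "Im a = 0" "Re z \<ge> 0" "Re a \<ge> 0" using assms by (auto simp: less_eq_complex_def)
  moreover have "Re a \<noteq> 0" using assms(3) \<open>Im a = 0\<close> complex_eq_iff by force
  ultimately show ?thesis by (simp add: less_eq_complex_def Re_divide Im_divide)
qed

lemma TR_nonneg_aux:
  assumes pW: "psd d W"
  shows "k \<le> d \<Longrightarrow> \<forall>A. psd d A \<and> (\<forall>i<d. \<forall>j<d. (i < k \<or> j < k) \<longrightarrow> A $$ (i,j) = 0) \<longrightarrow> 0 \<le> TR d W A"
proof (induction k rule: inc_induct)
  case base
  show ?case
  proof (intro allI impI)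
    fix A assume "psd d A \<and> (\<forall>i<d. \<forall>j<d. (i < d \<or> j < d) \<longrightarrow> A $$ (i,j) = 0)"
    then have "\<forall>i<d. \<forall>j<d. A $$ (i,j) = 0" by blast
    then have "TR d W A = 0" unfolding TR_def by simp
    then show "0 \<le> TR d W A" by simp
  qed
next
  case (step n)
  show ?case
  proof (intro allI impI)
    fix A assume hA: "psd d A \<and> (\<forall>i<d. \<forall>j<d. (i < n \<or> j < n) \<longrightarrow> A $$ (i,j) = 0)"
    have p: "psd d A" using hA by blast
    have zA: "\<And>i j. i < d \<Longrightarrow> j < d \<Longrightarrow> i < n \<or> j < n \<Longrightarrow> A $$ (i,j) = 0" using hA by blast
    have n: "n < d" using step by simp
    show "0 \<le> TR d W A"
    proof (cases "A $$ (n,n) = 0")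
      case True
      have r: "A $$ (n,j) = 0" if "j < d" for j using psd_zero_row[OF p n that True] .
      have c: "A $$ (j,n) = 0" if "j < d" for j
        using psd_herm[OF p n that] r[OF that] by simp
      have "\<forall>i<d. \<forall>j<d. (i < Suc n \<or> j < Suc n) \<longrightarrow> A $$ (i,j) = 0"
      proof (intro allI impI)
        fix i j assume "i < d" "j < d" "i < Suc n \<or> j < Suc n"
        then consider "i < n \<or> j < n" | "i = n" | "j = n" by linarith
        then show "A $$ (i,j) = 0"
          by cases (use zA r c \<open>i<d\<close> \<open>j<d\<close> in auto)
      qed
      then show ?thesis using step.IH p by blast
    next
      case False
      define a where "a = A $$ (n,n)"
      have anz: "a \<noteq> 0" using False a_def by simp
      have a0: "0 \<le> a" unfolding a_def by (rule psd_diag[OF p n])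
      define A' where "A' = peel d n A"
      have pA': "psd d A'" unfolding A'_def by (rule peel_psd[OF p n False])
      have zA': "\<forall>i<d. \<forall>j<d. (i < Suc n \<or> j < Suc n) \<longrightarrow> A' $$ (i,j) = 0"
      proof (intro allI impI)
        fix i j assume ij: "i < d" "j < d" "i < Suc n \<or> j < Suc n"
        then consider "i < n" | "j < n" | "i = n" | "j = n" by linarith
        then show "A' $$ (i,j) = 0"
        proof cases
          case 1 then show ?thesis using ij zA[of i j] zA[of i n] n by (simp add: A'_def peel_def)
        next
          case 2 then show ?thesis using ij zA[of i j] zA[of n j] n by (simp add: A'_def peel_def)
        next
          case 3 then show ?thesis using ij False by (simp add: A'_def peel_def)
        next
          case 4 then show ?thesis using ij False by (simp add: A'_def peel_def)
        qed
      qed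
      have IH: "0 \<le> TR d W A'" using step.IH pA' zA' by blast
      define g where "g = (\<lambda>j. A $$ (j,n))"
      have "TR d W A' = (\<Sum>i<d. \<Sum>j<d. W $$ (i,j) * A $$ (j,i) - W $$ (i,j) * (A $$ (j,n) * A $$ (n,i)) / a)"
        unfolding TR_def A'_def a_def by (intro sum.cong refl) (simp add: peel_def algebra_simps)
      also have "\<dots> = TR d W A - (\<Sum>i<d. \<Sum>j<d. cnj (g i) * W $$ (i,j) * g j) / a"
        unfolding TR_def sum_subtractf sum_divide_distrib
        by (intro arg_cong2[where f="(-)"] refl sum.cong) (simp_all add: g_def psd_herm[OF p _ n] mult_ac)
      also have "(\<Sum>i<d. \<Sum>j<d. cnj (g i) * W $$ (i,j) * g j) = Q d W g" by (simp add: Q_def)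
      finally have eq: "TR d W A = TR d W A' + Q d W g / a" by simp
      have "0 \<le> Q d W g / a" using nonneg_div_real[OF psd_Q[OF pW] a0 anz] .
      then show ?thesis unfolding eq using IH by simp
    qed
  qed
qed

lemma TR_nonneg: "psd d W \<Longrightarrow> psd d A \<Longrightarrow> 0 \<le> TR d W A"
  using TR_nonneg_aux[of d W 0] by simp

lemma trace_mult_TR:
  assumes "W \<in> carrier_mat d d" "A \<in> carrier_mat d d"
  shows "trace (W * A) = TR d W A"
  using assms unfolding trace_def TR_def
  by (intro sum.cong) (auto simp: scalar_prod_def lessThan_atLeast0 intro!: sum.cong)

lemma trace_psd_mult: "psd d W \<Longrightarrow> psd d A \<Longrightarrow> 0 \<le> trace (W * A)"
  using TR_nonneg trace_mult_TR psd_carrier by metis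


definition herm :: "nat \<Rightarrow> complex mat \<Rightarrow> bool" where
  "herm d A \<longleftrightarrow> A \<in> carrier_mat d d \<and> (\<forall>i<d. \<forall>j<d. A $$ (j,i) = cnj (A $$ (i,j)))"

lemma psd_iff_herm: "psd d A \<longleftrightarrow> herm d A \<and> (\<forall>f. 0 \<le> Q d A f)"
  unfolding psd_iff herm_def by blast

lemma psd_herm': "psd d A \<Longrightarrow> herm d A"
  unfolding psd_iff_herm by blast

lemma herm_one: "herm d (1\<^sub>m d)"
  unfolding herm_def by auto

lemma hermD: "herm d A \<Longrightarrow> i < d \<Longrightarrow> j < d \<Longrightarrow> A $$ (j,i) = cnj (A $$ (i,j))"
  unfolding herm_def by blast

lemma hermI: "A \<in> carrier_mat d d \<Longrightarrow> (\<And>i j. i < d \<Longrightarrow> j < d \<Longrightarrow> A $$ (j,i) = cnj (A $$ (i,j))) \<Longrightarrow> herm d A"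
  unfolding herm_def by blast

lemma herm_carrier: "herm d A \<Longrightarrow> A \<in> carrier_mat d d"
  unfolding herm_def by blast

lemma herm_add: "herm d A \<Longrightarrow> herm d B \<Longrightarrow> herm d (A + B)"
proof (rule hermI)
  assume a: "herm d A" and b: "herm d B"
  show "A + B \<in> carrier_mat d d" using herm_carrier[OF a] herm_carrier[OF b] by simp
  fix i j assume "i < d" "j < d"
  then show "(A + B) $$ (j,i) = cnj ((A + B) $$ (i,j))"
    using hermD[OF a, of i j] hermD[OF b, of i j] herm_carrier[OF a] herm_carrier[OF b] by simp
qed

lemma herm_minus: "herm d A \<Longrightarrow> herm d B \<Longrightarrow> herm d (A - B)"
proof (rule hermI)
  assume a: "herm d A" and b: "herm d B"
  show "A - B \<in> carrier_mat d d" using herm_carrier[OF b] by (rule minus_carrier_mat)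
  fix i j assume "i < d" "j < d"
  then show "(A - B) $$ (j,i) = cnj ((A - B) $$ (i,j))"
    using hermD[OF a, of i j] hermD[OF b, of i j] herm_carrier[OF a] herm_carrier[OF b] by simp
qed

lemma herm_smult: "herm d A \<Longrightarrow> herm d (complex_of_real c \<cdot>\<^sub>m A)"
proof (rule hermI)
  assume a: "herm d A"
  show "complex_of_real c \<cdot>\<^sub>m A \<in> carrier_mat d d" using herm_carrier[OF a] by simp
  fix i j assume "i < d" "j < d"
  then show "(complex_of_real c \<cdot>\<^sub>m A) $$ (j,i) = cnj ((complex_of_real c \<cdot>\<^sub>m A) $$ (i,j))"
    using hermD[OF a, of i j] herm_carrier[OF a] by simp
qed

definition nsq :: "nat \<Rightarrow> (nat \<Rightarrow> complex) \<Rightarrow> complex" where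
  "nsq d f = (\<Sum>i<d. cnj (f i) * f i)"

lemma Q_one: "Q d (1\<^sub>m d) f = nsq d f"
proof -
  have "Q d (1\<^sub>m d) f = (\<Sum>i<d. \<Sum>j<d. if j = i then cnj (f i) * f j else 0)"
    unfolding Q_def by (intro sum.cong refl) auto
  also have "\<dots> = nsq d f" unfolding nsq_def by simp
  finally show ?thesis .
qed

lemma Q_add: "A \<in> carrier_mat d d \<Longrightarrow> B \<in> carrier_mat d d \<Longrightarrow> Q d (A + B) f = Q d A f + Q d B f"
  unfolding Q_def by (simp add: sum.distrib[symmetric] algebra_simps)

lemma Q_minus: "A \<in> carrier_mat d d \<Longrightarrow> B \<in> carrier_mat d d \<Longrightarrow> Q d (A - B) f = Q d A f - Q d B f"
  unfolding Q_def by (simp add: sum_subtractf[symmetric] algebra_simps)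

lemma Q_smult: "A \<in> carrier_mat d d \<Longrightarrow> Q d (c \<cdot>\<^sub>m A) f = c * Q d A f"
  unfolding Q_def by (simp add: sum_distrib_left mult_ac)

lemma nsq_real: "0 \<le> nsq d f"
  unfolding nsq_def by (intro sum_nonneg) (simp add: less_eq_complex_def)

lemma CS_complex:
  "(cmod (\<Sum>i<d. cnj (w i) * f i))^2 \<le> Re (nsq d w) * Re (nsq d f)"
proof -
  have "cmod (\<Sum>i<d. cnj (w i) * f i) \<le> (\<Sum>i<d. cmod (w i) * cmod (f i))"
    by (rule order_trans[OF norm_sum]) (simp add: norm_mult)
  then have "(cmod (\<Sum>i<d. cnj (w i) * f i))^2 \<le> (\<Sum>i<d. cmod (w i) * cmod (f i))^2"
    by (simp add: power_mono)
  also have "\<dots> \<le> (\<Sum>i<d. (cmod (w i))^2) * (\<Sum>i<d. (cmod (f i))^2)"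
    by (rule Cauchy_Schwarz_ineq_sum)
  also have "(\<Sum>i<d. (cmod (w i))^2) = Re (nsq d w)"
    unfolding nsq_def Re_sum cmod_power2 by (simp add: power2_eq_square)
  also have "(\<Sum>i<d. (cmod (f i))^2) = Re (nsq d f)"
    unfolding nsq_def Re_sum cmod_power2 by (simp add: power2_eq_square)
  finally show ?thesis .
qed

lemma density_Q_le:
  assumes p: "psd d \<rho>" and tr: "trace \<rho> = 1"
  shows "Q d \<rho> f \<le> nsq d f"
proof -
  define N where "N = nsq d f"
  define B where "B = mat d d (\<lambda>(i,j). (if i = j then N else 0) - f i * cnj (f j))"
  have cN: "cnj N = N" unfolding N_def nsq_def by (simp add: mult.commute)
  have hB: "herm d B"
    by (rule hermI) (auto simp: B_def cN mult.commute)
  have "0 \<le> Q d B w" for w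
  proof -
    define X where "X = (\<Sum>i<d. cnj (w i) * f i)"
    have "Q d B w = (\<Sum>i<d. \<Sum>j<d. (if j = i then N * (cnj (w i) * w j) else 0) - (cnj (w i) * f i) * (cnj (f j) * w j))"
      unfolding Q_def B_def by (intro sum.cong refl) (auto simp: algebra_simps)
    also have "\<dots> = N * nsq d w - X * cnj X"
      unfolding sum_subtractf X_def sum_product[symmetric] nsq_def
      by (simp add: sum_distrib_left mult_ac)
    finally have eq: "Q d B w = N * nsq d w - X * cnj X" .
    have "Im N = 0" "Im (nsq d w) = 0" using nsq_real[of d f] nsq_real[of d w]
      by (auto simp: N_def less_eq_complex_def)
    moreover have "(Re X)^2 + (Im X)^2 \<le> Re (nsq d w) * Re N"
      using CS_complex[where d=d and w=w and f=f] unfolding X_def[symmetric] N_def[symmetric] cmod_power2 .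
    ultimately show ?thesis unfolding eq
      by (simp add: less_eq_complex_def power2_eq_square mult.commute)
  qed
  then have pB: "psd d B" using hB psd_iff_herm by blast
  have "0 \<le> TR d B \<rho>" by (rule TR_nonneg[OF pB p])
  also have "TR d B \<rho> = N * trace \<rho> - Q d \<rho> f"
  proof -
    have c: "\<rho> \<in> carrier_mat d d" using psd_carrier[OF p] .
    have "TR d B \<rho> = (\<Sum>i<d. \<Sum>j<d. (if j = i then N * \<rho> $$ (j,i) else 0) - f i * cnj (f j) * \<rho> $$ (j,i))"
      unfolding TR_def B_def by (intro sum.cong refl) (auto simp: algebra_simps)
    also have "\<dots> = N * trace \<rho> - (\<Sum>i<d. \<Sum>j<d. f i * cnj (f j) * \<rho> $$ (j,i))"
      unfolding sum_subtractf trace_def using c by (simp add: sum_distrib_left)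
    also have "(\<Sum>i<d. \<Sum>j<d. f i * cnj (f j) * \<rho> $$ (j,i)) = Q d \<rho> f"
      unfolding Q_def by (subst sum.swap) (simp add: mult_ac)
    finally show ?thesis .
  qed
  finally show ?thesis using tr N_def by simp
qed


lemma adj_carrier: "U \<in> carrier_mat d d \<Longrightarrow> adjoint_mat U \<in> carrier_mat d d"
  by (simp add: adjoint_mat_def)

lemma adj_index: "U \<in> carrier_mat d d \<Longrightarrow> i < d \<Longrightarrow> j < d \<Longrightarrow> adjoint_mat U $$ (i,j) = cnj (U $$ (j,i))"
  by (simp add: adjoint_mat_def)

lemma Q_vec:
  assumes "A \<in> carrier_mat d d"
  shows "Q d A f = conjugate (vec d f) \<bullet> (A *\<^sub>v vec d f)"
  using assms unfolding Q_def
  by (simp add: scalar_prod_def mult_mat_vec_def lessThan_atLeast0 sum_distrib_left mult_ac)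

lemma adj_move:
  assumes U: "U \<in> carrier_mat d d" and x: "x \<in> carrier_vec d" and y: "y \<in> carrier_vec d"
  shows "conjugate x \<bullet> (U *\<^sub>v y) = conjugate (adjoint_mat U *\<^sub>v x) \<bullet> y"
proof -
  have "conjugate x \<bullet> (U *\<^sub>v y) = (\<Sum>i<d. cnj (x $ i) * (\<Sum>k<d. U $$ (i,k) * y $ k))"
    using U x y by (simp add: scalar_prod_def lessThan_atLeast0)
  also have "\<dots> = (\<Sum>i<d. \<Sum>k<d. cnj (x $ i) * U $$ (i,k) * y $ k)"
    by (simp add: sum_distrib_left mult_ac)
  also have "\<dots> = (\<Sum>k<d. \<Sum>i<d. cnj (x $ i) * U $$ (i,k) * y $ k)"
    by (rule sum.swap)
  also have "\<dots> = (\<Sum>k<d. cnj (\<Sum>i<d. cnj (U $$ (i,k)) * x $ i) * y $ k)"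
    by (simp add: sum_distrib_right sum_distrib_left mult_ac)
  also have "\<dots> = conjugate (adjoint_mat U *\<^sub>v x) \<bullet> y"
    using U x y by (simp add: scalar_prod_def lessThan_atLeast0 adjoint_mat_def)
  finally show ?thesis .
qed

lemma conj_entry:
  assumes U: "U \<in> carrier_mat d d" and R: "R \<in> carrier_mat d d" and i: "i < d" and j: "j < d"
  shows "(U * R * adjoint_mat U) $$ (i,j) = (\<Sum>k<d. \<Sum>l<d. U $$ (i,k) * R $$ (k,l) * cnj (U $$ (j,l)))"
proof -
  have "(U * R * adjoint_mat U) $$ (i,j) = (\<Sum>l<d. (U * R) $$ (i,l) * cnj (U $$ (j,l)))"
    using U R i j by (simp add: scalar_prod_def lessThan_atLeast0 adjoint_mat_def)
  also have "\<dots> = (\<Sum>l<d. (\<Sum>k<d. U $$ (i,k) * R $$ (k,l)) * cnj (U $$ (j,l)))"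
    using U R i by (intro sum.cong refl) (simp add: scalar_prod_def lessThan_atLeast0)
  also have "\<dots> = (\<Sum>l<d. \<Sum>k<d. U $$ (i,k) * R $$ (k,l) * cnj (U $$ (j,l)))"
    by (simp add: sum_distrib_right)
  also have "\<dots> = (\<Sum>k<d. \<Sum>l<d. U $$ (i,k) * R $$ (k,l) * cnj (U $$ (j,l)))"
    by (rule sum.swap)
  finally show ?thesis .
qed

lemma conj_carrier: "U \<in> carrier_mat d d \<Longrightarrow> R \<in> carrier_mat d d \<Longrightarrow> U * R * adjoint_mat U \<in> carrier_mat d d"
  by (metis adj_carrier mult_carrier_mat)

lemma conj_psd:
  assumes U: "U \<in> carrier_mat d d" and p: "psd d R"
  shows "psd d (U * R * adjoint_mat U)"
  unfolding psd_iff_herm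
proof (intro conjI allI)
  have R: "R \<in> carrier_mat d d" using psd_carrier[OF p] .
  show "herm d (U * R * adjoint_mat U)"
  proof (rule hermI)
    show "U * R * adjoint_mat U \<in> carrier_mat d d" using conj_carrier[OF U R] .
    fix i j assume i: "i < d" and j: "j < d"
    have "(U * R * adjoint_mat U) $$ (j,i) = (\<Sum>k<d. \<Sum>l<d. U $$ (j,k) * R $$ (k,l) * cnj (U $$ (i,l)))"
      by (rule conj_entry[OF U R j i])
    also have "\<dots> = (\<Sum>l<d. \<Sum>k<d. U $$ (j,k) * R $$ (k,l) * cnj (U $$ (i,l)))"
      by (rule sum.swap)
    also have "\<dots> = (\<Sum>l<d. \<Sum>k<d. cnj (U $$ (i,l) * R $$ (l,k) * cnj (U $$ (j,k))))"
      by (intro sum.cong refl) (simp add: psd_herm[OF p] mult_ac)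
    also have "\<dots> = cnj ((U * R * adjoint_mat U) $$ (i,j))"
      unfolding conj_entry[OF U R i j] by simp
    finally show "(U * R * adjoint_mat U) $$ (j,i) = cnj ((U * R * adjoint_mat U) $$ (i,j))" .
  qed
  fix f :: "nat \<Rightarrow> complex"
  define v where "v = vec d f"
  have v: "v \<in> carrier_vec d" by (simp add: v_def)
  have aU: "adjoint_mat U \<in> carrier_mat d d" using adj_carrier[OF U] .
  define w where "w = adjoint_mat U *\<^sub>v v"
  have w: "w \<in> carrier_vec d" using aU v by (simp add: w_def)
  have "Q d (U * R * adjoint_mat U) f = conjugate v \<bullet> ((U * R * adjoint_mat U) *\<^sub>v v)"
    unfolding v_def by (rule Q_vec[OF conj_carrier[OF U R]])
  also have "(U * R * adjoint_mat U) *\<^sub>v v = U *\<^sub>v (R *\<^sub>v w)"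
  proof -
    have UR: "U * R \<in> carrier_mat d d" using U R by simp
    have "(U * R * adjoint_mat U) *\<^sub>v v = (U * R) *\<^sub>v w"
      unfolding w_def by (rule assoc_mult_mat_vec[OF UR aU v])
    also have "\<dots> = U *\<^sub>v (R *\<^sub>v w)" by (rule assoc_mult_mat_vec[OF U R w])
    finally show ?thesis .
  qed
  also have "conjugate v \<bullet> (U *\<^sub>v (R *\<^sub>v w)) = conjugate w \<bullet> (R *\<^sub>v w)"
    unfolding w_def by (rule adj_move[OF U v]) (use R w w_def in simp)
  also have "w = vec d (\<lambda>i. w $ i)" using w by auto
  also have "conjugate (vec d (\<lambda>i. w $ i)) \<bullet> (R *\<^sub>v vec d (\<lambda>i. w $ i)) = Q d R (\<lambda>i. w $ i)"
    by (rule Q_vec[OF R, symmetric])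
  finally show "0 \<le> Q d (U * R * adjoint_mat U) f" using psd_Q[OF p] by simp
qed

lemma conj_trace:
  assumes U: "U \<in> carrier_mat d d" and R: "R \<in> carrier_mat d d" and uu: "adjoint_mat U * U = 1\<^sub>m d"
  shows "trace (U * R * adjoint_mat U) = trace R"
proof -
  have e: "(\<Sum>i<d. cnj (U $$ (i,l)) * U $$ (i,k)) = (if l = k then 1 else 0)" if "l < d" "k < d" for l k
  proof -
    have "(adjoint_mat U * U) $$ (l,k) = (\<Sum>i<d. cnj (U $$ (i,l)) * U $$ (i,k))"
      using U that by (simp add: scalar_prod_def lessThan_atLeast0 adjoint_mat_def)
    then show ?thesis using uu that by simp
  qed
  have "trace (U * R * adjoint_mat U) = (\<Sum>i<d. \<Sum>k<d. \<Sum>l<d. U $$ (i,k) * R $$ (k,l) * cnj (U $$ (i,l)))"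
    unfolding trace_def using U conj_entry[OF U R] by simp
  also have "\<dots> = (\<Sum>k<d. \<Sum>i<d. \<Sum>l<d. U $$ (i,k) * R $$ (k,l) * cnj (U $$ (i,l)))"
    by (rule sum.swap)
  also have "\<dots> = (\<Sum>k<d. \<Sum>l<d. \<Sum>i<d. U $$ (i,k) * R $$ (k,l) * cnj (U $$ (i,l)))"
    by (intro sum.cong refl sum.swap)
  also have "\<dots> = (\<Sum>k<d. \<Sum>l<d. R $$ (k,l) * (\<Sum>i<d. cnj (U $$ (i,l)) * U $$ (i,k)))"
    by (simp add: sum_distrib_left mult_ac)
  also have "\<dots> = (\<Sum>k<d. \<Sum>l<d. if l = k then R $$ (k,l) else 0)"
    by (intro sum.cong refl) (simp add: e)
  also have "\<dots> = trace R" using R by (simp add: trace_def)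
  finally show ?thesis .
qed


lemma trace_add: "A \<in> carrier_mat d d \<Longrightarrow> B \<in> carrier_mat d d \<Longrightarrow> trace (A + B) = trace A + trace B"
  unfolding trace_def by (simp add: sum.distrib)

lemma trace_minus: "A \<in> carrier_mat d d \<Longrightarrow> B \<in> carrier_mat d d \<Longrightarrow> trace (A - B) = trace A - trace B"
  unfolding trace_def by (simp add: sum_subtractf)

lemma trace_smult: "A \<in> carrier_mat d d \<Longrightarrow> trace (c \<cdot>\<^sub>m A) = c * trace A"
  unfolding trace_def by (simp add: sum_distrib_left)

lemma trace_one: "trace (1\<^sub>m d) = of_nat d"
  unfolding trace_def by simp

lemma trace_psd:
  assumes "psd d A" shows "0 \<le> trace A"
proof -
  have "trace A = (\<Sum>i<d. A $$ (i,i))" using psd_carrier[OF assms] by (simp add: trace_def)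
  also have "0 \<le> \<dots>" by (rule sum_nonneg) (simp add: psd_diag[OF assms])
  finally show ?thesis by simp
qed

lemma depol_carrier: "R \<in> carrier_mat d d \<Longrightarrow> depol p d R \<in> carrier_mat d d"
  unfolding depol_def by simp

lemma depol_herm: "herm d R \<Longrightarrow> herm d (depol p d R)"
  unfolding depol_def by (intro herm_add herm_smult herm_one)

lemma Q_depol: "R \<in> carrier_mat d d \<Longrightarrow>
   Q d (depol p d R) f = complex_of_real (p / real d) * nsq d f + complex_of_real (1 - p) * Q d R f"
  unfolding depol_def by (simp add: Q_add Q_smult Q_one)

lemma trace_depol:
  assumes "R \<in> carrier_mat d d" "trace R = 1" "d > 0"
  shows "trace (depol p d R) = 1"
proof -
  have "trace (depol p d R) = complex_of_real (p / real d) * of_nat d + complex_of_real (1 - p) * trace R"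
  proof -
    have c1: "complex_of_real (p / real d) \<cdot>\<^sub>m 1\<^sub>m d \<in> carrier_mat d d" by simp
    have c2: "complex_of_real (1 - p) \<cdot>\<^sub>m R \<in> carrier_mat d d" using assms(1) by simp
    show ?thesis unfolding depol_def trace_add[OF c1 c2] trace_smult[OF one_carrier_mat] trace_smult[OF assms(1)] trace_one ..
  qed
  also have "\<dots> = 1" using assms by (simp add: field_simps)
  finally show ?thesis .
qed

lemma Re_nsq: "Re (nsq d f) = (\<Sum>i<d. (cmod (f i))^2)"
  unfolding nsq_def Re_sum cmod_power2 by (simp add: power2_eq_square)

lemma Im_nsq: "Im (nsq d f) = 0"
  using nsq_real[of d f] by (simp add: less_eq_complex_def)

lemma nsq_zero: "Re (nsq d f) = 0 \<Longrightarrow> i < d \<Longrightarrow> f i = 0"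
  unfolding Re_nsq by (subst (asm) sum_nonneg_eq_0_iff) auto

lemma cnonneg: "0 \<le> (z::complex) \<longleftrightarrow> Im z = 0 \<and> 0 \<le> Re z"
  by (auto simp: less_eq_complex_def)

lemma cle: "(z::complex) \<le> w \<longleftrightarrow> Im z = Im w \<and> Re z \<le> Re w"
  by (auto simp: less_eq_complex_def)

lemma density_loewner:
  assumes p1: "psd d R1" and t1: "trace R1 = 1" and p2: "psd d R2" and t2: "trace R2 = 1"
    and pp: "0 < p" "p \<le> 1" and d: "d > 0"
  defines "r \<equiv> 1 + real d * (1 - p) / p"
  shows "loewner_le d (depol p d R1) (complex_of_real r \<cdot>\<^sub>m depol p d R2)"
  unfolding loewner_le_def psd_iff_herm
proof (intro conjI allI)
  have c1: "R1 \<in> carrier_mat d d" and c2: "R2 \<in> carrier_mat d d" using psd_carrier p1 p2 by auto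
  show "herm d (complex_of_real r \<cdot>\<^sub>m depol p d R2 - depol p d R1)"
    by (intro herm_minus herm_smult depol_herm psd_herm' p1 p2)
  fix f :: "nat \<Rightarrow> complex"
  define a where "a = p / real d"
  define b where "b = 1 - p"
  have ra: "r * a = a + b" unfolding r_def a_def b_def using pp d by (simp add: field_simps)
  have b0: "b \<ge> 0" using pp b_def by simp
  have r0: "r \<ge> 0" unfolding r_def using pp d by simp
  have q1: "Q d R1 f \<le> nsq d f" by (rule density_Q_le[OF p1 t1])
  have q2: "0 \<le> Q d R2 f" by (rule psd_Q[OF p2])
  have "Q d (complex_of_real r \<cdot>\<^sub>m depol p d R2 - depol p d R1) f =
     complex_of_real r * (complex_of_real a * nsq d f + complex_of_real b * Q d R2 f)
      - (complex_of_real a * nsq d f + complex_of_real b * Q d R1 f)"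
    using c1 c2 by (simp add: Q_minus Q_smult Q_depol depol_carrier a_def b_def)
  also have "0 \<le> \<dots>"
  proof -
    have i1: "Im (Q d R1 f) = 0" and i2: "Im (Q d R2 f) = 0" and i3: "Im (nsq d f) = 0"
      using q1 q2 Im_nsq by (auto simp: cle cnonneg)
    have l1: "Re (Q d R1 f) \<le> Re (nsq d f)" and l2: "0 \<le> Re (Q d R2 f)" using q1 q2 by (auto simp: cle cnonneg)
    have "r * (a * Re (nsq d f) + b * Re (Q d R2 f)) - (a * Re (nsq d f) + b * Re (Q d R1 f))
        = b * (Re (nsq d f) - Re (Q d R1 f)) + r * b * Re (Q d R2 f)"
    proof -
      have "r * (a * Re (nsq d f) + b * Re (Q d R2 f)) - (a * Re (nsq d f) + b * Re (Q d R1 f))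
        = (r * a - a) * Re (nsq d f) + r * b * Re (Q d R2 f) - b * Re (Q d R1 f)"
        by (simp add: algebra_simps)
      also have "r * a - a = b" using ra by simp
      finally show ?thesis by (simp add: algebra_simps)
    qed
    also have "\<dots> \<ge> 0" using l1 l2 b0 r0 by (intro add_nonneg_nonneg mult_nonneg_nonneg) auto
    finally show ?thesis using i1 i2 i3 by (simp add: cnonneg)
  qed
  finally show "0 \<le> Q d (complex_of_real r \<cdot>\<^sub>m depol p d R2 - depol p d R1) f" .
qed


lemma depol_surj:
  assumes pR: "psd d R" and pp: "0 < p" "p \<le> 1" and d: "d > 0" and u: "u \<in> carrier_vec d"
  shows "u \<in> supp d (depol p d R)"
proof -
  define B where "B = depol p d R"
  have cR: "R \<in> carrier_mat d d" using psd_carrier[OF pR] .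
  have cB: "B \<in> carrier_mat d d" unfolding B_def by (rule depol_carrier[OF cR])
  have inj: "v = 0\<^sub>v d" if v: "v \<in> carrier_vec d" and Bv: "B *\<^sub>v v = 0\<^sub>v d" for v
  proof -
    have vv: "vec d (\<lambda>i. v $ i) = v" using v by auto
    have "Q d B (\<lambda>i. v $ i) = conjugate v \<bullet> (B *\<^sub>v v)"
      using Q_vec[OF cB, of "\<lambda>i. v $ i"] unfolding vv .
    also have "\<dots> = 0" unfolding Bv using v by simp
    finally have Q0: "Q d B (\<lambda>i. v $ i) = 0" .
    have "Q d B (\<lambda>i. v $ i) = complex_of_real (p / real d) * nsq d (\<lambda>i. v $ i)
          + complex_of_real (1 - p) * Q d R (\<lambda>i. v $ i)"
      unfolding B_def by (rule Q_depol[OF cR])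
    then have "Re (complex_of_real (p / real d) * nsq d (\<lambda>i. v $ i)
          + complex_of_real (1 - p) * Q d R (\<lambda>i. v $ i)) = 0"
      using Q0 by simp
    then have "0 = (p / real d) * Re (nsq d (\<lambda>i. v $ i)) + (1 - p) * Re (Q d R (\<lambda>i. v $ i))"
      by simp
    moreover have "0 \<le> Re (Q d R (\<lambda>i. v $ i))" using psd_Q[OF pR] by (simp add: cnonneg)
    moreover have "0 \<le> Re (nsq d (\<lambda>i. v $ i))" using nsq_real by (simp add: cnonneg)
    moreover have "p / real d > 0" using pp d by simp
    ultimately have "Re (nsq d (\<lambda>i. v $ i)) = 0" using pp
      by (smt (verit, best) mult_nonneg_nonneg mult_pos_pos)
    then have "\<And>i. i < d \<Longrightarrow> v $ i = 0" using nsq_zero by blast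
    then show "v = 0\<^sub>v d" using v by (intro eq_vecI) auto
  qed
  have "det B \<noteq> 0"
  proof
    assume "det B = 0"
    then obtain v where "v \<in> carrier_vec d" "v \<noteq> 0\<^sub>v d" "B *\<^sub>v v = 0\<^sub>v d"
      using det_0_iff_vec_prod_zero[OF cB] by blast
    then show False using inj by blast
  qed
  then have "B \<in> Units (ring_mat TYPE(complex) d ())" by (rule det_non_zero_imp_unit[OF cB])
  then obtain C where cC: "C \<in> carrier_mat d d" and BC: "B * C = 1\<^sub>m d"
    by (auto simp: Units_def ring_mat_def)
  have "B *\<^sub>v (C *\<^sub>v u) = (B * C) *\<^sub>v u" using cB cC u by simp
  also have "\<dots> = u" using BC u by simp
  finally have "u = B *\<^sub>v (C *\<^sub>v u)" by simp
  moreover have "C *\<^sub>v u \<in> carrier_vec d" using cC u by simp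
  ultimately show ?thesis unfolding supp_def B_def by blast
qed

lemma supp_carrier: "A \<in> carrier_mat d d \<Longrightarrow> supp d A \<subseteq> carrier_vec d"
  unfolding supp_def by auto

lemma Dmax_bound:
  assumes p1: "psd d R1" and t1: "trace R1 = 1" and p2: "psd d R2" and t2: "trace R2 = 1"
    and pp: "0 < p" "p \<le> 1" and d: "d > 0"
  shows "Dmax d (depol p d R1) (depol p d R2) \<le> ereal (log 2 (1 + real d * (1 - p) / p))"
proof -
  define r where "r = 1 + real d * (1 - p) / p"
  define D1 where "D1 = depol p d R1"
  define D2 where "D2 = depol p d R2"
  have c1: "D1 \<in> carrier_mat d d" unfolding D1_def using depol_carrier psd_carrier[OF p1] by blast
  have c2: "D2 \<in> carrier_mat d d" unfolding D2_def using depol_carrier psd_carrier[OF p2] by blast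
  have tD1: "trace D1 = 1" unfolding D1_def using trace_depol psd_carrier[OF p1] t1 d by blast
  have tD2: "trace D2 = 1" unfolding D2_def using trace_depol psd_carrier[OF p2] t2 d by blast
  have sub: "supp d D1 \<subseteq> supp d D2"
    using supp_carrier[OF c1] depol_surj[OF p2 pp d] unfolding D2_def by blast
  define S where "S = {\<mu>::real. loewner_le d D1 (complex_of_real \<mu> \<cdot>\<^sub>m D2)}"
  have rS: "r \<in> S" unfolding S_def r_def D1_def D2_def mem_Collect_eq by (rule density_loewner[OF p1 t1 p2 t2 pp d])
  have ge1: "1 \<le> \<mu>" if "\<mu> \<in> S" for \<mu>
  proof -
    have "psd d (complex_of_real \<mu> \<cdot>\<^sub>m D2 - D1)" using that unfolding S_def loewner_le_def by simp
    then have "0 \<le> trace (complex_of_real \<mu> \<cdot>\<^sub>m D2 - D1)" by (rule trace_psd)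
    also have "trace (complex_of_real \<mu> \<cdot>\<^sub>m D2 - D1) = complex_of_real \<mu> - 1"
      unfolding trace_minus[OF smult_carrier_mat[OF c2] c1] trace_smult[OF c2] tD1 tD2 by simp
    finally show ?thesis by (simp add: cnonneg)
  qed
  have Sne: "S \<noteq> {}" using rS by blast
  have bdd: "bdd_below S" using ge1 by (intro bdd_belowI) 
  have "1 \<le> Inf S" using Sne ge1 by (intro cInf_greatest) auto
  moreover have "Inf S \<le> r" using rS bdd by (rule cInf_lower)
  ultimately have "log 2 (Inf S) \<le> log 2 r" by (intro log_mono) auto
  then show ?thesis unfolding Dmax_def using sub
    by (simp add: D1_def D2_def S_def r_def)
qed


lemma trace_O_depol:
  assumes cO: "W \<in> carrier_mat d d" and cS: "S \<in> carrier_mat d d"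
  shows "trace (W * depol p d S) = complex_of_real (p / real d) * trace W + complex_of_real (1 - p) * trace (W * S)"
proof -
  have c1: "complex_of_real (p / real d) \<cdot>\<^sub>m 1\<^sub>m d \<in> carrier_mat d d" by simp
  have c2: "complex_of_real (1 - p) \<cdot>\<^sub>m S \<in> carrier_mat d d" using cS by simp
  have "W * depol p d S = W * (complex_of_real (p / real d) \<cdot>\<^sub>m 1\<^sub>m d) + W * (complex_of_real (1 - p) \<cdot>\<^sub>m S)"
    unfolding depol_def by (rule mult_add_distrib_mat[OF cO c1 c2])
  also have "W * (complex_of_real (p / real d) \<cdot>\<^sub>m 1\<^sub>m d) = complex_of_real (p / real d) \<cdot>\<^sub>m W"
    using mult_smult_distrib[OF cO one_carrier_mat] right_mult_one_mat[OF cO] by simp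
  also have "W * (complex_of_real (1 - p) \<cdot>\<^sub>m S) = complex_of_real (1 - p) \<cdot>\<^sub>m (W * S)"
    by (rule mult_smult_distrib[OF cO cS])
  finally have e: "W * depol p d S = complex_of_real (p / real d) \<cdot>\<^sub>m W + complex_of_real (1 - p) \<cdot>\<^sub>m (W * S)" .
  have cWS: "W * S \<in> carrier_mat d d" using cO cS by simp
  show ?thesis unfolding e
    by (simp add: trace_add[OF smult_carrier_mat[OF cO] smult_carrier_mat[OF cWS]] trace_smult[OF cO] trace_smult[OF cWS])
qed

lemma sum_trace_povm:
  assumes pv: "povm d C Ob" and cS: "S \<in> carrier_mat d d"
  shows "(\<Sum>c\<in>C. trace (Ob c * S)) = trace S"
proof -
  have fin: "finite C" and pc: "\<And>c. c \<in> C \<Longrightarrow> psd d (Ob c)" and ms: "msum d Ob C = 1\<^sub>m d"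
    using pv unfolding povm_def by auto
  have m: "(\<Sum>c\<in>C. Ob c $$ (i,j)) = (if i = j then 1 else 0)" if "i < d" "j < d" for i j
  proof -
    have "msum d Ob C $$ (i,j) = (\<Sum>c\<in>C. Ob c $$ (i,j))" using that by (simp add: msum_def)
    then show ?thesis using ms that by simp
  qed
  have "(\<Sum>c\<in>C. trace (Ob c * S)) = (\<Sum>c\<in>C. \<Sum>i<d. \<Sum>j<d. Ob c $$ (i,j) * S $$ (j,i))"
    using trace_mult_TR[OF psd_carrier[OF pc] cS] unfolding TR_def by (intro sum.cong refl) auto
  also have "\<dots> = (\<Sum>i<d. \<Sum>c\<in>C. \<Sum>j<d. Ob c $$ (i,j) * S $$ (j,i))"
    by (rule sum.swap)
  also have "\<dots> = (\<Sum>i<d. \<Sum>j<d. \<Sum>c\<in>C. Ob c $$ (i,j) * S $$ (j,i))"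
    by (intro sum.cong refl sum.swap)
  also have "\<dots> = (\<Sum>i<d. \<Sum>j<d. (\<Sum>c\<in>C. Ob c $$ (i,j)) * S $$ (j,i))"
    by (simp add: sum_distrib_right)
  also have "\<dots> = (\<Sum>i<d. \<Sum>j<d. if i = j then S $$ (j,i) else 0)"
    by (intro sum.cong refl) (simp add: m)
  also have "\<dots> = trace S" using cS by (simp add: trace_def)
  finally show ?thesis .
qed

lemma cmod_nonneg: "0 \<le> (z::complex) \<Longrightarrow> cmod z = Re z"
  by (simp add: cnonneg cmod_eq_Re)

lemma Gamma_term_bound:
  assumes pv: "povm d C Ob" and pS: "psd d S" and tS: "trace S = 1" and d: "d > 0"
    and p0: "0 \<le> p" and p1: "p \<le> 1"
  shows "(\<Sum>c\<in>C. cmod (trace (Ob c * S) - trace (Ob c * depol p d S))) \<le> 2 * p"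
proof -
  have fin: "finite C" and pc: "\<And>c. c \<in> C \<Longrightarrow> psd d (Ob c)"
    using pv unfolding povm_def by auto
  have cS: "S \<in> carrier_mat d d" using psd_carrier[OF pS] .
  define a where "a = p / real d"
  have a0: "a \<ge> 0" using p0 a_def by simp
  have bound: "cmod (trace (Ob c * S) - trace (Ob c * depol p d S)) \<le> p * Re (trace (Ob c * S)) + a * Re (trace (Ob c))"
    if c: "c \<in> C" for c
  proof -
    have cO: "Ob c \<in> carrier_mat d d" using psd_carrier[OF pc[OF c]] .
    have t1: "0 \<le> trace (Ob c * S)" by (rule trace_psd_mult[OF pc[OF c] pS])
    have t2: "0 \<le> trace (Ob c)" by (rule trace_psd[OF pc[OF c]])
    have "trace (Ob c * S) - trace (Ob c * depol p d S)
        = complex_of_real p * trace (Ob c * S) - complex_of_real a * trace (Ob c)"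
      unfolding trace_O_depol[OF cO cS] a_def by (simp add: algebra_simps)
    then have "cmod (trace (Ob c * S) - trace (Ob c * depol p d S))
        \<le> cmod (complex_of_real p * trace (Ob c * S)) + cmod (complex_of_real a * trace (Ob c))"
      by (simp add: norm_triangle_ineq4)
    also have "\<dots> = p * Re (trace (Ob c * S)) + a * Re (trace (Ob c))"
      using p0 a0 cmod_nonneg[OF t1] cmod_nonneg[OF t2] by (simp add: norm_mult)
    finally show ?thesis .
  qed
  have "(\<Sum>c\<in>C. cmod (trace (Ob c * S) - trace (Ob c * depol p d S)))
      \<le> (\<Sum>c\<in>C. p * Re (trace (Ob c * S)) + a * Re (trace (Ob c)))"
    by (rule sum_mono) (rule bound)
  also have "\<dots> = p * Re (\<Sum>c\<in>C. trace (Ob c * S)) + a * Re (\<Sum>c\<in>C. trace (Ob c * 1\<^sub>m d))"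
  proof -
    have "\<And>c. c \<in> C \<Longrightarrow> Ob c * 1\<^sub>m d = Ob c" using pc psd_carrier right_mult_one_mat by blast
    then show ?thesis by (simp add: sum.distrib sum_distrib_left Re_sum)
  qed
  also have "\<dots> = p * 1 + a * real d"
    unfolding sum_trace_povm[OF pv cS] sum_trace_povm[OF pv one_carrier_mat] tS trace_one by simp
  also have "\<dots> = 2 * p" using d a_def by simp
  finally show ?thesis .
qed


lemma msum_point:
  assumes finX: "finite X" and x0: "x0 \<in> X" and ct: "\<And>x. x \<in> X \<Longrightarrow> \<tau> x \<in> carrier_mat d d"
  shows "msum d (\<lambda>x'. complex_of_real (if x' = x0 then 1 else 0) \<cdot>\<^sub>m \<tau> x') X = \<tau> x0"
proof (rule eq_matI)
  fix i j assume i: "i < dim_row (\<tau> x0)" and j: "j < dim_col (\<tau> x0)"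
  then have i': "i < d" and j': "j < d" using ct[OF x0] by auto
  have "msum d (\<lambda>x'. complex_of_real (if x' = x0 then 1 else 0) \<cdot>\<^sub>m \<tau> x') X $$ (i,j)
      = (\<Sum>s\<in>X. (complex_of_real (if s = x0 then 1 else 0) \<cdot>\<^sub>m \<tau> s) $$ (i,j))"
    unfolding msum_def index_mat(1)[OF i' j'] by (simp only: prod.case)
  also have "\<dots> = (\<Sum>s\<in>X. if s = x0 then \<tau> x0 $$ (i,j) else 0)"
  proof (intro sum.cong refl)
    fix s assume "s \<in> X"
    then have "\<tau> s \<in> carrier_mat d d" by (rule ct)
    then have "(complex_of_real (if s = x0 then 1 else 0) \<cdot>\<^sub>m \<tau> s) $$ (i,j) = complex_of_real (if s = x0 then 1 else 0) * \<tau> s $$ (i,j)"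
      using i' j' by simp
    also have "\<dots> = (if s = x0 then \<tau> x0 $$ (i,j) else 0)" by simp
    finally show "(complex_of_real (if s = x0 then 1 else 0) \<cdot>\<^sub>m \<tau> s) $$ (i,j) = (if s = x0 then \<tau> x0 $$ (i,j) else 0)" .
  qed
  also have "\<dots> = \<tau> x0 $$ (i,j)" using finX x0 by (simp add: sum.delta')
  finally show "msum d (\<lambda>x'. complex_of_real (if x' = x0 then 1 else 0) \<cdot>\<^sub>m \<tau> x') X $$ (i,j) = \<tau> x0 $$ (i,j)" .
qed (use ct[OF x0] in \<open>simp_all add: msum_def\<close>)

lemma part1:
  assumes finX: "finite X" and x0: "x0 \<in> X" and ct: "\<And>x. x \<in> X \<Longrightarrow> \<tau> x \<in> carrier_mat d d"
  shows "Bq d X \<tau> \<le> Rq d X \<tau>"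
proof -
    have finXX: "finite (X \<times> X)" using finX by simp
    have neX: "X \<noteq> {}" using x0 by blast
    define \<pi> where "\<pi> = (\<lambda>x. if x = x0 then (1::real) else 0)"
    have \<pi>: "\<pi> \<in> pmfs X" unfolding pmfs_def \<pi>_def using finX x0 by simp
    have ms: "msum d (\<lambda>x'. complex_of_real (\<pi> x') \<cdot>\<^sub>m \<tau> x') X = \<tau> x0"
      unfolding \<pi>_def by (rule msum_point[OF finX x0 ct])
    have "Bq d X \<tau> \<le> Max ((\<lambda>x. Dmax d (\<tau> x) (msum d (\<lambda>x'. complex_of_real (\<pi> x') \<cdot>\<^sub>m \<tau> x') X)) ` X)"
      unfolding Bq_def by (rule INF_lower[OF \<pi>])
    also have "\<dots> = Max ((\<lambda>x. Dmax d (\<tau> x) (\<tau> x0)) ` X)" unfolding ms ..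
    also have "\<dots> \<le> Rq d X \<tau>"
      unfolding Rq_def
    proof (subst Max_le_iff)
      show "finite ((\<lambda>x. Dmax d (\<tau> x) (\<tau> x0)) ` X)" using finX by simp
      show "(\<lambda>x. Dmax d (\<tau> x) (\<tau> x0)) ` X \<noteq> {}" using neX by simp
      show "\<forall>a\<in>(\<lambda>x. Dmax d (\<tau> x) (\<tau> x0)) ` X. a \<le> Max ((\<lambda>(x, x'). Dmax d (\<tau> x) (\<tau> x')) ` (X \<times> X))"
      proof
        fix a assume "a \<in> (\<lambda>x. Dmax d (\<tau> x) (\<tau> x0)) ` X"
        then obtain x where x: "x \<in> X" and a: "a = Dmax d (\<tau> x) (\<tau> x0)" by blast
        have xx: "(x, x0) \<in> X \<times> X" using x x0 by simp
        have "a \<in> (\<lambda>(x, x'). Dmax d (\<tau> x) (\<tau> x')) ` (X \<times> X)"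
          by (rule image_eqI[OF _ xx]) (simp add: a)
        then show "a \<le> Max ((\<lambda>(x, x'). Dmax d (\<tau> x) (\<tau> x')) ` (X \<times> X))"
          using finXX by simp
      qed
    qed
    finally show ?thesis .
qed


lemma Gle_lem:
  assumes finX: "finite X" and neX: "X \<noteq> {}"
    and pr: "\<And>x. x \<in> X \<Longrightarrow> psd d (\<rho> x)" and tr: "\<And>x. x \<in> X \<Longrightarrow> trace (\<rho> x) = 1"
    and cU: "U \<in> carrier_mat d d" and UU: "adjoint_mat U * U = 1\<^sub>m d"
    and pv: "povm d C Ob" and d: "d > 0" and p0: "0 \<le> p" and p1: "p \<le> 1"
  shows "Gamma_depol p d X \<rho> U C Ob \<le> 2 * p"
  unfolding Gamma_depol_def
proof (subst Max_le_iff)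
  let ?f = "(\<lambda>x. \<Sum>c\<in>C. cmod (trace (Ob c * (U * \<rho> x * adjoint_mat U)) - trace (Ob c * depol p d (U * \<rho> x * adjoint_mat U))))"
  show "finite (?f ` X)" using finX by (rule finite_imageI)
  show "?f ` X \<noteq> {}" using neX by simp
  show "\<forall>a\<in>?f ` X. a \<le> 2 * p"
  proof
    fix a assume "a \<in> ?f ` X"
    then obtain x where x: "x \<in> X" and a: "a = ?f x" by blast
    have cr: "\<rho> x \<in> carrier_mat d d" using psd_carrier[OF pr[OF x]] .
    have pS: "psd d (U * \<rho> x * adjoint_mat U)" by (rule conj_psd[OF cU pr[OF x]])
    have tS: "trace (U * \<rho> x * adjoint_mat U) = 1" using conj_trace[OF cU cr UU] tr[OF x] by simp
    show "a \<le> 2 * p" unfolding a by (rule Gamma_term_bound[OF pv pS tS d p0 p1])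
  qed
qed

lemma G0_lem:
  assumes finX: "finite X" and x0: "x0 \<in> X"
  shows "0 \<le> Gamma_depol p d X \<rho> U C Ob"
  unfolding Gamma_depol_def
proof -
  let ?f = "(\<lambda>x. \<Sum>c\<in>C. cmod (trace (Ob c * (U * \<rho> x * adjoint_mat U)) - trace (Ob c * depol p d (U * \<rho> x * adjoint_mat U))))"
  have "?f x0 \<le> Max (?f ` X)" using finX x0 by (intro Max_ge finite_imageI imageI)
  moreover have "0 \<le> ?f x0" by (intro sum_nonneg norm_ge_zero)
  ultimately show "0 \<le> Max (?f ` X)" by linarith
qed



lemma arith_lem:
  assumes d: "d > 0" and p1: "p \<le> 1" and Gle: "G \<le> 2 * p" and Gp: "G > 0"
  shows "log 2 (1 + real d * (1 - p) / p) \<le> log 2 ((1 - 2 * real d) + 4 * real d / G)"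
proof -
  have pp: "p > 0" using Gle Gp by simp
  define r where "r = 1 + real d * (1 - p) / p"
  have r1: "r \<ge> 1" unfolding r_def using pp p1 by simp
  have "2 * real d / p \<le> 4 * real d / G"
  proof -
    have "4 * real d / G \<ge> 4 * real d / (2 * p)"
      using Gp Gle d by (intro divide_left_mono) auto
    then show ?thesis by simp
  qed
  moreover have "r = 1 - 2 * real d + 2 * real d / p - real d * (1 - p) / p"
    unfolding r_def using pp by (simp add: field_simps)
  moreover have "real d * (1 - p) / p \<ge> 0" using pp p1 by simp
  ultimately have rle: "r \<le> (1 - 2 * real d) + 4 * real d / G" by linarith
  show ?thesis unfolding r_def[symmetric]
    using r1 rle by (intro log_mono) auto
qed

lemma Rq_bound:
  assumes finX: "finite X" and x0: "x0 \<in> X"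
    and pr: "\<And>x. x \<in> X \<Longrightarrow> psd d (\<rho> x)" and tr: "\<And>x. x \<in> X \<Longrightarrow> trace (\<rho> x) = 1"
    and d: "d > 0" and pp: "0 < p" and p1: "p \<le> 1"
  shows "Rq d X (\<lambda>x. depol p d (\<rho> x)) \<le> ereal (log 2 (1 + real d * (1 - p) / p))"
  unfolding Rq_def
proof (subst Max_le_iff)
  let ?g = "(\<lambda>(x, x'). Dmax d (depol p d (\<rho> x)) (depol p d (\<rho> x')))"
  show "finite (?g ` (X \<times> X))" using finX by (intro finite_imageI finite_cartesian_product)
  show "?g ` (X \<times> X) \<noteq> {}" using x0 by blast
  show "\<forall>a\<in>?g ` (X \<times> X). a \<le> ereal (log 2 (1 + real d * (1 - p) / p))"
  proof
    fix a assume "a \<in> ?g ` (X \<times> X)"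
    then obtain z where z: "z \<in> X \<times> X" and az: "a = ?g z" by (rule imageE)
    obtain x x' where zx: "z = (x, x')" by (cases z)
    have x: "x \<in> X" and x': "x' \<in> X" using z zx by auto
    have a: "a = Dmax d (depol p d (\<rho> x)) (depol p d (\<rho> x'))" using az zx by simp
    show "a \<le> ereal (log 2 (1 + real d * (1 - p) / p))" unfolding a
      by (rule Dmax_bound[OF pr[OF x] tr[OF x] pr[OF x'] tr[OF x'] pp p1 d])
  qed
qed

theorem corollary3:
  fixes X :: "'x set" and C :: "'c set" and d :: nat and p :: real
    and \<rho> :: "'x \<Rightarrow> complex mat" and U :: "complex mat" and Ob :: "'c \<Rightarrow> complex mat"
  assumes "finite X" and "X \<noteq> {}"
    and "\<forall>x\<in>X. density d (\<rho> x)"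
    and "unitary d U"
    and "povm d C Ob"
    and "0 \<le> p" and "p \<le> 1"
  shows "Bq d X (\<lambda>x. depol p d (\<rho> x)) \<le> Rq d X (\<lambda>x. depol p d (\<rho> x)) \<and>
         Rq d X (\<lambda>x. depol p d (\<rho> x)) \<le>
           (if Gamma_depol p d X \<rho> U C Ob = 0 then \<infinity>
            else ereal (log 2 ((1 - 2 * real d) + 4 * real d / Gamma_depol p d X \<rho> U C Ob)))"
proof -
  note finX = assms(1) and neX = assms(2) and pv = assms(5) and p0 = assms(6) and p1 = assms(7)
  have pr: "\<And>x. x \<in> X \<Longrightarrow> psd d (\<rho> x)" and tr: "\<And>x. x \<in> X \<Longrightarrow> trace (\<rho> x) = 1"
    using assms(3) unfolding density_def by auto
  have cr: "\<And>x. x \<in> X \<Longrightarrow> \<rho> x \<in> carrier_mat d d" using pr psd_carrier by blast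
  obtain x0 where x0: "x0 \<in> X" using neX by blast
  have d: "d > 0"
  proof (rule ccontr)
    assume "\<not> d > 0"
    then have "d = 0" by simp
    then have "trace (\<rho> x0) = 0" using cr[OF x0] by (simp add: trace_def)
    then show False using tr[OF x0] by simp
  qed
  have cU: "U \<in> carrier_mat d d" and UU: "adjoint_mat U * U = 1\<^sub>m d"
    using assms(4) unfolding unitary_def by auto
  have ct: "\<And>x. x \<in> X \<Longrightarrow> depol p d (\<rho> x) \<in> carrier_mat d d" using depol_carrier cr by blast
  have part1: "Bq d X (\<lambda>x. depol p d (\<rho> x)) \<le> Rq d X (\<lambda>x. depol p d (\<rho> x))"
    by (rule part1[OF finX x0 ct])
  define G where "G = Gamma_depol p d X \<rho> U C Ob"
  have Gle: "G \<le> 2 * p" unfolding G_def by (rule Gle_lem[OF finX neX pr tr cU UU pv d p0 p1])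
  have G0: "0 \<le> G" unfolding G_def by (rule G0_lem[OF finX x0])
  have part2: "Rq d X (\<lambda>x. depol p d (\<rho> x)) \<le> (if G = 0 then \<infinity> else ereal (log 2 ((1 - 2 * real d) + 4 * real d / G)))"
  proof (cases "G = 0")
    case True
    then show ?thesis by simp
  next
    case False
    then have Gp: "G > 0" using G0 by simp
    then have pp: "p > 0" using Gle by simp
    have "Rq d X (\<lambda>x. depol p d (\<rho> x)) \<le> ereal (log 2 (1 + real d * (1 - p) / p))"
      by (rule Rq_bound[OF finX x0 pr tr d pp p1])
    also have "\<dots> \<le> ereal (log 2 ((1 - 2 * real d) + 4 * real d / G))"
      using arith_lem[OF d p1 Gle Gp] by simp
    finally show ?thesis using False by simp
  qed
  show ?thesis using part1 part2 unfolding G_def by blast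
qed

end
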